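(* Let $a=(a_{31}a_{30}\cdots a_{0})_2$ be an IEEE 754 \textbf{binary32} (normalized) floating-point number, so that $$a=(-1)^{a_{31}}\times 2^{(a_{30}a_{29}\cdots a_{23})_2-127}\times\Big(1+\sum_{i=1}^{23}a_{23-i}2^{-i}\Big).$$ Let $p\in[0,1]$, and let $\tilde a$ be the number obtained from $a$ by keeping the sign bit $a_{31}$ and the exponent bits $a_{30},\dots,a_{23}$ unchanged and flipping each of the 23 fraction bits $a_{22},\dots,a_0$ independently with probability $p$. Then the mean of the decimal value of $\tilde a$ is $$\mathbb{E}(\tilde a)=(1-2p)\,a+(-1)^{a_{31}}\,2^{(a_{30}a_{29}\cdots a_{23})_2-127}\Big(2p+\sum_{i=1}^{23}2^{-i}p\Big),$$ and its variance is $$\mathrm{Var}(\tilde a)=\frac{1-4^{-23}}{3}\,p(1-p)\,2^{2(a_{30}a_{29}\cdots a_{23})_2-254}.$$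
   Context: $(b_k\cdots b_0)_2$ denotes the nonnegative integer (or, after a binary point, the binary fraction) with binary digits $b_k,\dots,b_0$. In \textbf{binary32}, $a_{31}$ is the sign bit, $a_{30}\cdots a_{23}$ are the 8 exponent bits and $a_{22}\cdots a_0$ are the 23 fraction bits, with an implicit leading 1 before the binary point. *)

theory Defs
  imports "HOL-Probability.Probability"
begin

text \<open>A binary32 word is modelled by its bits a_0,...,a_31 as a function nat => bool
  (only indices 0..31 matter).\<close>

definition exp_field :: "(nat \<Rightarrow> bool) \<Rightarrow> nat" where
  "exp_field a = (\<Sum>i<8. of_bool (a (23 + i)) * 2 ^ i)"

definition normalized32 :: "(nat \<Rightarrow> bool) \<Rightarrow> bool" where
  "normalized32 a \<longleftrightarrow> 1 \<le> exp_field a \<and> exp_field a \<le> 254"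

definition val32 :: "(nat \<Rightarrow> bool) \<Rightarrow> real" where
  "val32 a = (-1) ^ of_bool (a 31) * 2 powr (real (exp_field a) - 127)
     * (1 + (\<Sum>i=1..23. of_bool (a (23 - i)) * (1/2) ^ i))"

definition flip_frac :: "(nat \<Rightarrow> bool) \<Rightarrow> (nat \<Rightarrow> bool) \<Rightarrow> (nat \<Rightarrow> bool)" where
  "flip_frac a f = (\<lambda>j. if j < 23 then (a j \<noteq> f j) else a j)"

definition perturbed32 :: "real \<Rightarrow> (nat \<Rightarrow> bool) \<Rightarrow> real pmf" where
  "perturbed32 p a = map_pmf (\<lambda>f. val32 (flip_frac a f))
      (Pi_pmf {..<23} False (\<lambda>_. bernoulli_pmf p))"

end

theory Submission
  imports Defs
begin

abbreviation QQ :: "real \<Rightarrow> (nat \<Rightarrow> bool) pmf" where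
  "QQ p \<equiv> Pi_pmf {..<23} False (\<lambda>_. bernoulli_pmf p)"

lemma QQ_fin: "finite (set_pmf (QQ p))"
proof -
  have "set_pmf (QQ p) \<subseteq> {f. \<forall>x. x \<notin> {..<23::nat} \<longrightarrow> f x = False}"
    by (rule set_Pi_pmf_subset) simp
  moreover have "finite (PiE_dflt {..<23::nat} False (\<lambda>_. UNIV :: bool set))"
    by (rule finite_PiE_dflt) auto
  moreover have "{f. \<forall>x. x \<notin> {..<23::nat} \<longrightarrow> f x = False} = PiE_dflt {..<23::nat} False (\<lambda>_. UNIV)"
    by (auto simp: PiE_dflt_def)
  ultimately show ?thesis by (metis finite_subset)
qed

lemma QQ_int: "integrable (measure_pmf (QQ p)) (f :: _ \<Rightarrow> real)"
  by (rule integrable_measure_pmf_finite[OF QQ_fin])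

lemma QQ_comp:
  assumes "k < 23" "0 \<le> p" "p \<le> 1"
  shows "measure_pmf.expectation (QQ p) (\<lambda>f. h (f k)) = h True * p + h False * (1 - p)"
proof -
  have "measure_pmf.expectation (QQ p) (\<lambda>f. h (f k))
      = measure_pmf.expectation (map_pmf (\<lambda>f. f k) (QQ p)) h" by simp
  also have "map_pmf (\<lambda>f. f k) (QQ p) = bernoulli_pmf p"
    using assms by (subst Pi_pmf_component) auto
  finally show ?thesis using assms by simp
qed

lemma QQ_pair:
  fixes h g :: "bool \<Rightarrow> real"
  assumes "k < 23" "l < 23" "k \<noteq> l" "0 \<le> p" "p \<le> 1"
    and "\<And>v. h v \<ge> 0" "\<And>v. g v \<ge> 0"
  shows "measure_pmf.expectation (QQ p) (\<lambda>f. h (f k) * g (f l))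
     = (h True * p + h False * (1 - p)) * (g True * p + g False * (1 - p))"
proof -
  define F where "F = (\<lambda>x v. if x = k then h v else if x = l then g v else (1::real))"
  have A: "{..<23::nat} = insert k (insert l ({..<23} - {k, l}))" using assms by auto
  have "\<And>f. (\<Prod>x\<in>{..<23}. F x (f x)) = h (f k) * g (f l)"
    apply (subst A) using assms by (auto simp: F_def)
  hence "measure_pmf.expectation (QQ p) (\<lambda>f. h (f k) * g (f l))
       = measure_pmf.expectation (QQ p) (\<lambda>f. \<Prod>x\<in>{..<23}. F x (f x))" by simp
  also have "\<dots> = (\<Prod>x\<in>{..<23}. measure_pmf.expectation (bernoulli_pmf p) (F x))"
    by (rule expectation_prod_Pi_pmf) (auto simp: F_def assms integrable_measure_pmf_finite)
  also have "\<dots> = measure_pmf.expectation (bernoulli_pmf p) (F k) * measure_pmf.expectation (bernoulli_pmf p) (F l)"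
    apply (subst A) using assms by (auto simp: F_def)
  finally show ?thesis using assms by (simp add: F_def)
qed

lemma geo4: "(\<Sum>i=1..n. (1/4::real) ^ i) = (1 - (1/4) ^ n) / 3"
proof (induction n)
  case (Suc n)
  have "(\<Sum>i=1..Suc n. (1/4::real) ^ i) = (\<Sum>i=1..n. (1/4::real) ^ i) + (1/4) ^ Suc n"
    by simp
  also have "\<dots> = (1 - (1/4) ^ n) / 3 + (1/4) ^ Suc n" using Suc by simp
  also have "\<dots> = (1 - (1/4) ^ Suc n) / 3" by (simp add: field_simps)
  finally show ?case .
qed simp

lemma alg1: "c * (1 + ((1 - 2 * p) * S + T)) = (1 - 2 * p) * (c * (1 + S)) + c * (2 * p + (T::real))"
  by (simp add: algebra_simps)

theorem lemma1:
  fixes a :: "nat \<Rightarrow> bool" and p :: real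
  assumes "normalized32 a" and "0 \<le> p" and "p \<le> 1"
  shows "(measure_pmf.expectation (perturbed32 p a) (\<lambda>x. x) =
           (1 - 2 * p) * val32 a + (-1) ^ of_bool (a 31) * 2 powr (real (exp_field a) - 127)
             * (2 * p + (\<Sum>i=1..23. (1/2) ^ i * p))) \<and>
         (measure_pmf.variance (perturbed32 p a) (\<lambda>x. x) =
           (1 - (1/4) ^ 23) / 3 * p * (1 - p) * 2 powr (2 * real (exp_field a) - 254))"
proof -
  have p: "0 \<le> p" "p \<le> 1" using assms by auto
  define c where "c = (-1::real) ^ of_bool (a 31) * 2 powr (real (exp_field a) - 127)"
  define w :: "nat \<Rightarrow> real" where "w i = (1/2) ^ i" for i
  define B where "B i f = (of_bool (a (23 - i) \<noteq> f (23 - i)) :: real)" for i f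
  define m where "m i = of_bool (a (23 - i)) * (1 - 2 * p) + p" for i
  define X where "X f = c * (1 + (\<Sum>i=1..23. w i * B i f))" for f
  have ef: "exp_field (flip_frac a f) = exp_field a" for f
    unfolding exp_field_def flip_frac_def by simp
  have vX: "val32 (flip_frac a f) = X f" for f
    unfolding val32_def X_def c_def ef B_def w_def
    by (simp add: flip_frac_def mult.commute)
  have EB: "measure_pmf.expectation (QQ p) (B i) = m i" if "i \<in> {1..23}" for i
    using QQ_comp[of "23 - i" p "\<lambda>v. of_bool (a (23 - i) \<noteq> v)"] that p
    unfolding B_def m_def by (cases "a (23 - i)") (auto simp: algebra_simps)
  have EBB: "measure_pmf.expectation (QQ p) (\<lambda>f. B i f * B j f) = m i * m j"
    if "i \<in> {1..23}" "j \<in> {1..23}" "i \<noteq> j" for i j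
    using QQ_pair[of "23 - i" "23 - j" p "\<lambda>v. of_bool (a (23 - i) \<noteq> v)" "\<lambda>v. of_bool (a (23 - j) \<noteq> v)"] that p
    unfolding B_def m_def by (cases "a (23 - i)"; cases "a (23 - j)") (auto simp: algebra_simps)
  have BB: "B i f * B i f = B i f" for i f by (auto simp: B_def)
  have EX: "measure_pmf.expectation (QQ p) X = c * (1 + (\<Sum>i=1..23. w i * m i))"
    unfolding X_def
    by (simp add: QQ_int EB Bochner_Integration.integral_sum)
  have cov: "measure_pmf.expectation (QQ p) (\<lambda>f. (B i f - m i) * (B j f - m j))
       = (if i = j then p * (1 - p) else 0)" if "i \<in> {1..23}" "j \<in> {1..23}" for i j
  proof -
    have e: "(\<lambda>f. (B i f - m i) * (B j f - m j)) = (\<lambda>f. (B i f * B j f - m j * B i f - m i * B j f) + m i * m j)"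
      by (rule ext) (simp add: algebra_simps)
    show ?thesis
    proof (cases "i = j")
      case True
      then show ?thesis unfolding e using that
        by (simp add: QQ_int EB BB Bochner_Integration.integral_diff)
           (cases "a (23 - j)"; simp add: m_def algebra_simps)
    next
      case False
      then show ?thesis unfolding e using that
        by (simp add: QQ_int EB EBB Bochner_Integration.integral_diff algebra_simps)
    qed
  qed
  have pert: "perturbed32 p a = map_pmf X (QQ p)"
    unfolding perturbed32_def using vX by (simp add: fun_eq_iff)
  have E1: "measure_pmf.expectation (perturbed32 p a) (\<lambda>x. x) = c * (1 + (\<Sum>i=1..23. w i * m i))"
    unfolding pert using EX by simp
  have part1: "c * (1 + (\<Sum>i=1..23. w i * m i)) =
           (1 - 2 * p) * val32 a + c * (2 * p + (\<Sum>i=1..23. (1/2) ^ i * p))"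
  proof -
    have eqS: "(\<Sum>i=1..23. w i * m i) = (1 - 2 * p) * (\<Sum>i=1..23. of_bool (a (23 - i)) * (1/2) ^ i)
          + (\<Sum>i=1..23. (1/2) ^ i * p)"
    proof -
      have "(\<Sum>i=1..23. w i * m i) = (\<Sum>i=1..23. (1 - 2 * p) * (of_bool (a (23 - i)) * (1/2) ^ i)
          + (1/2) ^ i * p)"
        by (rule sum.cong) (simp_all add: m_def w_def algebra_simps)
      also have "\<dots> = (1 - 2 * p) * (\<Sum>i=1..23. of_bool (a (23 - i)) * (1/2) ^ i)
          + (\<Sum>i=1..23. (1/2) ^ i * p)"
        by (simp only: sum.distrib sum_distrib_left)
      finally show ?thesis .
    qed
    have v: "val32 a = c * (1 + (\<Sum>i=1..23. of_bool (a (23 - i)) * (1/2) ^ i))"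
      unfolding val32_def c_def by simp
    show ?thesis unfolding eqS v by (rule alg1)
  qed
  have dev: "(X f - c * (1 + (\<Sum>i=1..23. w i * m i)))\<^sup>2
      = (\<Sum>i=1..23. \<Sum>j=1..23. c\<^sup>2 * (w i * w j) * ((B i f - m i) * (B j f - m j)))" for f
  proof -
    have "X f - c * (1 + (\<Sum>i=1..23. w i * m i)) = c * (\<Sum>i=1..23. w i * (B i f - m i))"
      unfolding X_def by (simp add: algebra_simps sum_subtractf)
    thus ?thesis
      by (simp add: power2_eq_square sum_product sum_distrib_left algebra_simps)
  qed
  have V: "measure_pmf.variance (perturbed32 p a) (\<lambda>x. x)
      = (\<Sum>i=1..23. \<Sum>j=1..23. c\<^sup>2 * (w i * w j) * (if i = j then p * (1 - p) else 0))"
  proof -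
    have "measure_pmf.variance (perturbed32 p a) (\<lambda>x. x) = measure_pmf.expectation (QQ p)
       (\<lambda>f. (\<Sum>i=1..23. \<Sum>j=1..23. c\<^sup>2 * (w i * w j) * ((B i f - m i) * (B j f - m j))))"
      unfolding E1 unfolding pert by (simp only: integral_map_pmf dev)
    also have "\<dots> = (\<Sum>i=1..23. \<Sum>j=1..23. measure_pmf.expectation (QQ p)
       (\<lambda>f. c\<^sup>2 * (w i * w j) * ((B i f - m i) * (B j f - m j))))"
      by (simp only: Bochner_Integration.integral_sum QQ_int)
    also have "\<dots> = (\<Sum>i=1..23. \<Sum>j=1..23. c\<^sup>2 * (w i * w j) * measure_pmf.expectation (QQ p)
       (\<lambda>f. ((B i f - m i) * (B j f - m j))))"
      by (simp only: Bochner_Integration.integral_mult_right_zero)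
    also have "\<dots> = (\<Sum>i=1..23. \<Sum>j=1..23. c\<^sup>2 * (w i * w j) * (if i = j then p * (1 - p) else 0))"
      by (intro sum.cong refl) (simp add: cov)
    finally show ?thesis .
  qed
  also have "\<dots> = c\<^sup>2 * p * (1 - p) * (\<Sum>i=1..23. (1/4) ^ i)"
    by (simp add: w_def sum_distrib_left power_mult_distrib[symmetric] algebra_simps if_distrib
        sum.delta cong: if_cong)
  finally have V2: "measure_pmf.variance (perturbed32 p a) (\<lambda>x. x) = c\<^sup>2 * p * (1 - p) * (\<Sum>i=1..23. (1/4) ^ i)" .
  have C2: "c\<^sup>2 = 2 powr (2 * real (exp_field a) - 254)"
    unfolding c_def by (simp add: power_mult_distrib powr_add[symmetric] power2_eq_square)
  have G: "(\<Sum>i=1..23. (1/4::real) ^ i) = (1 - (1/4) ^ 23) / 3" by (rule geo4)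
  show ?thesis
  proof
    show "measure_pmf.expectation (perturbed32 p a) (\<lambda>x. x) =
           (1 - 2 * p) * val32 a + (-1) ^ of_bool (a 31) * 2 powr (real (exp_field a) - 127)
             * (2 * p + (\<Sum>i=1..23. (1/2) ^ i * p))"
      unfolding E1 part1 unfolding c_def ..
    show "measure_pmf.variance (perturbed32 p a) (\<lambda>x. x) =
           (1 - (1/4) ^ 23) / 3 * p * (1 - p) * 2 powr (2 * real (exp_field a) - 254)"
      unfolding V2 C2 G by (simp only: mult_ac)
  qed
qed

end
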